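(* Let $\alpha>0$, $\beta\ge0$, $h>0$, and $V'(h)>0$. Set $b=\beta/h^2$. For $\theta\in(0,2\pi)$, consider the complex quadratic equation in $z$ $$z^2+z\big(\alpha-b(e^{i\theta}-1)\big)-\alpha V'(h)\,(e^{i\theta}-1)=0 .$$ If $\theta=\pi$, this equation has no purely imaginary root $z\in i\mathbb{R}$. If $\theta\neq\pi$, it has a purely imaginary root if and only if $$V'(h)=\frac{\alpha}{2\cos^2(\theta/2)}+b+2\tan^2(\theta/2)\, b\left(\frac{b}{\alpha}+1\right).$$
   Context: This quadratic is the characteristic equation obtained by substituting Fourier modes $y_n(t)=\exp(i\theta n+zt)$ into the linearization $$\ddot y_n=\alpha\big(V'(h)(y_{n+1}-y_n)-\dot y_n\big)+\frac{\beta}{h^2}(\dot y_{n+1}-\dot y_n)$$ of the single-lane model $$\dot x_n=v_n,\qquad \dot v_n=\alpha(V(x_{n+1}-x_n)-v_n)+\beta\frac{v_{n+1}-v_n}{(x_{n+1}-x_n)^2}$$ around the uniform flow with headway $h$. Here $V$ is a differentiable optimal velocity function. For a ring with $N$ vehicles, the admissible values are $\theta=a_k=2\pi k/N$. *)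

theory Defs
  imports Complex_Main
begin

text \<open>Characteristic quadratic of the linearised model at wave number theta,
  with V'(h) = Vp and b = beta / h^2.\<close>
definition char_poly :: "real \<Rightarrow> real \<Rightarrow> real \<Rightarrow> real \<Rightarrow> complex \<Rightarrow> complex" where
  "char_poly \<alpha> b Vp \<theta> z =
     z\<^sup>2 + z * (complex_of_real \<alpha> - complex_of_real b * (cis \<theta> - 1))
       - complex_of_real (\<alpha> * Vp) * (cis \<theta> - 1)"

end

theory Submission
  imports Defs
begin

lemma cp_iff: "char_poly a b Vp t (\<i> * complex_of_real w) = 0 \<longleftrightarrow>
   (-(w^2) + w*b*sin t - a*Vp*(cos t - 1) = 0 \<and> w*(a - b*(cos t - 1)) - a*Vp*sin t = 0)"
  unfolding char_poly_def
  by (simp add: complex_eq_iff cis.code power2_eq_square algebra_simps)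

lemma cx_lem: "0 < x \<Longrightarrow> x < pi \<Longrightarrow> x \<noteq> pi/2 \<Longrightarrow> cos x \<noteq> 0"
proof (cases "x < pi/2")
  case True
  assume "0 < x" then show ?thesis using cos_monotone_0_pi[of x "pi/2"] True by simp
next
  case False
  assume "x < pi" "x \<noteq> pi/2" then show ?thesis using cos_monotone_0_pi[of "pi/2" x] False by simp
qed

theorem mainTheorem2:
  fixes V :: "real \<Rightarrow> real" and \<alpha> \<beta> h \<theta> Vp :: real
  assumes "\<alpha> > 0" and "\<beta> \<ge> 0" and "h > 0"
    and "(V has_real_derivative Vp) (at h)" and "Vp > 0"
    and "\<theta> \<in> {0<..<2 * pi}"
  defines "b \<equiv> \<beta> / h\<^sup>2"
  shows "(\<theta> = pi \<longrightarrow> \<not> (\<exists>\<omega>::real. char_poly \<alpha> b Vp \<theta> (\<i> * complex_of_real \<omega>) = 0))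
       \<and> (\<theta> \<noteq> pi \<longrightarrow>
           ((\<exists>\<omega>::real. char_poly \<alpha> b Vp \<theta> (\<i> * complex_of_real \<omega>) = 0)
            \<longleftrightarrow> Vp = \<alpha> / (2 * (cos (\<theta> / 2))\<^sup>2) + b
                             + 2 * (tan (\<theta> / 2))\<^sup>2 * b * (b / \<alpha> + 1)))"
proof -
  have a: "\<alpha> > 0" and V: "Vp > 0" using assms by auto
  have b0: "b \<ge> 0" unfolding b_def using assms by simp
  define x where "x = \<theta> / 2"
  have x: "0 < x" "x < pi" using assms(6) by (auto simp: x_def)
  have sx: "sin x > 0" using x by (simp add: sin_gt_zero)
  have c2: "cos \<theta> = 2 * (cos x)^2 - 1" unfolding x_def using cos_double_cos[of "\<theta>/2"] by simp
  have s2: "sin \<theta> = 2 * sin x * cos x" unfolding x_def using sin_double[of "\<theta>/2"] by simp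
  have pyth: "(sin x)^2 + (cos x)^2 = 1" by simp
  define D where "D = \<alpha> - b * (cos \<theta> - 1)"
  have "b*(1-cos \<theta>) \<ge> 0" using b0 cos_le_one[of \<theta>] by simp
  moreover have "D = \<alpha> + b*(1-cos \<theta>)" unfolding D_def by (simp add: algebra_simps)
  ultimately have Dpos: "D > 0" using a by linarith
  show ?thesis
  proof (intro conjI impI)
    assume "\<theta> = pi"
    then show "\<not> (\<exists>\<omega>::real. char_poly \<alpha> b Vp \<theta> (\<i> * complex_of_real \<omega>) = 0)"
      using Dpos a V unfolding cp_iff D_def by (auto simp: mult_pos_pos)
  next
    assume np: "\<theta> \<noteq> pi"
    have cx: "cos x \<noteq> 0" using cx_lem[OF x] np by (auto simp: x_def)
    have cx2: "(cos x)^2 > 0" using cx by simp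
    have tan2: "(tan x)^2 = (sin x)^2 / (cos x)^2" by (simp add: tan_def power_divide)
    define f where "f = \<alpha> / (2 * (cos x)\<^sup>2) + b + 2 * (tan x)\<^sup>2 * b * (b / \<alpha> + 1)"
    have Cs: "(cos x)^2 = 1 - (sin x)^2" using pyth by linarith
    have Dx: "D = \<alpha> + 2*b*(sin x)^2" unfolding D_def c2 Cs by (simp add: algebra_simps)
    have ff: "f * (\<alpha> * (2*(cos x)^2)) = \<alpha>^2 + 2*b*\<alpha>*(cos x)^2 + 4*(sin x)^2*b*(b+\<alpha>)"
      unfolding f_def tan2 using a cx by (simp add: field_simps power2_eq_square)
    have fD: "f * (\<alpha> * (2*(cos x)^2)) = D * (\<alpha> + 2*b)"
      proof -
      have "\<alpha>^2 + 2*b*\<alpha>*(cos x)^2 + 4*(sin x)^2*b*(b+\<alpha>) = D * (\<alpha> + 2*b)"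
        unfolding Dx Cs by (simp add: algebra_simps power2_eq_square)
      then show ?thesis using ff by simp
    qed
    have DB: "b*(2*(cos x)^2) + D = \<alpha> + 2*b" unfolding Dx Cs by (simp add: algebra_simps)
    have K: "b*(2*(cos x)^2)*D + D^2 = D*(\<alpha>+2*b)"
    proof -
      have "D*(\<alpha>+2*b) = D*(b*(2*(cos x)^2) + D)" by (simp add: DB)
      then show ?thesis by (simp add: algebra_simps power2_eq_square)
    qed
    have M: "-\<alpha>*Vp*(2*(cos x)^2) = -(Vp * \<alpha> * (2*(cos x)^2))" by simp
    have nz: "\<alpha> * (2*(cos x)^2) \<noteq> 0" using a cx2 by simp
    have RHS: "(Vp = \<alpha> / (2 * (cos (\<theta> / 2))\<^sup>2) + b + 2 * (tan (\<theta> / 2))\<^sup>2 * b * (b / \<alpha> + 1))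
       \<longleftrightarrow> Vp * \<alpha> * (2*(cos x)^2) = D * (\<alpha> + 2*b)"
      unfolding x_def[symmetric] f_def[symmetric] fD[symmetric] using nz by (simp add: mult.assoc)
    have cm1: "cos \<theta> - 1 = -2*(sin x)^2" unfolding c2 Cs by (simp add: algebra_simps)
    have GEN: "\<And>w. D^2 * (-(w^2) + w*b*sin \<theta> - \<alpha>*Vp*(cos \<theta> - 1))
       = - ((w*D)^2) + (w*D)*b*sin \<theta>*D - D^2*\<alpha>*Vp*(cos \<theta> - 1)"
      by (simp add: algebra_simps power2_eq_square)
    have ID: "- ((\<alpha>*Vp*sin \<theta>)^2) + \<alpha>*Vp*sin \<theta>*b*sin \<theta>*D - D^2*\<alpha>*Vp*(cos \<theta> - 1)
        = \<alpha>*Vp*(2*(sin x)^2) * (-\<alpha>*Vp*(2*(cos x)^2) + b*(2*(cos x)^2)*D + D^2)"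
      unfolding cm1 s2 by (simp add: algebra_simps power2_eq_square)
    have "(\<exists>\<omega>::real. char_poly \<alpha> b Vp \<theta> (\<i> * complex_of_real \<omega>) = 0)
       \<longleftrightarrow> Vp * \<alpha> * (2*(cos x)^2) = D * (\<alpha> + 2*b)"
    proof
      assume "\<exists>\<omega>::real. char_poly \<alpha> b Vp \<theta> (\<i> * complex_of_real \<omega>) = 0"
      then obtain w where re: "-(w^2) + w*b*sin \<theta> - \<alpha>*Vp*(cos \<theta> - 1) = 0"
        and im: "w*D - \<alpha>*Vp*sin \<theta> = 0" unfolding cp_iff D_def by auto
      have wD: "w*D = \<alpha>*Vp*sin \<theta>" using im by simp
      have "D^2 * (-(w^2) + w*b*sin \<theta> - \<alpha>*Vp*(cos \<theta> - 1)) = 0" using re by simp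
      then have "- ((\<alpha>*Vp*sin \<theta>)^2) + \<alpha>*Vp*sin \<theta>*b*sin \<theta>*D - D^2*\<alpha>*Vp*(cos \<theta> - 1) = 0"
        unfolding GEN wD .
      then have "\<alpha>*Vp*(2*(sin x)^2) * (-\<alpha>*Vp*(2*(cos x)^2) + b*(2*(cos x)^2)*D + D^2) = 0"
        unfolding ID .
      then have E: "-\<alpha>*Vp*(2*(cos x)^2) + b*(2*(cos x)^2)*D + D^2 = 0"
        using a V sx by simp
      then show "Vp * \<alpha> * (2*(cos x)^2) = D * (\<alpha> + 2*b)" using E K M by linarith
    next
      assume H: "Vp * \<alpha> * (2*(cos x)^2) = D * (\<alpha> + 2*b)"
      define w where "w = \<alpha>*Vp*sin \<theta> / D"
      have wD: "w*D = \<alpha>*Vp*sin \<theta>" using Dpos by (simp add: w_def)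
      have im: "w*D - \<alpha>*Vp*sin \<theta> = 0" using wD by simp
      have E: "-\<alpha>*Vp*(2*(cos x)^2) + b*(2*(cos x)^2)*D + D^2 = 0"
        using H K M by linarith
      have "\<alpha>*Vp*(2*(sin x)^2) * (-\<alpha>*Vp*(2*(cos x)^2) + b*(2*(cos x)^2)*D + D^2) = 0"
        using E by simp
      then have "- ((\<alpha>*Vp*sin \<theta>)^2) + \<alpha>*Vp*sin \<theta>*b*sin \<theta>*D - D^2*\<alpha>*Vp*(cos \<theta> - 1) = 0"
        unfolding ID .
      then have "D^2 * (-(w^2) + w*b*sin \<theta> - \<alpha>*Vp*(cos \<theta> - 1)) = 0"
        unfolding GEN wD .
      then have re: "-(w^2) + w*b*sin \<theta> - \<alpha>*Vp*(cos \<theta> - 1) = 0" using Dpos by simp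
      show "\<exists>\<omega>::real. char_poly \<alpha> b Vp \<theta> (\<i> * complex_of_real \<omega>) = 0"
        using re im unfolding cp_iff D_def by auto
    qed
    then show "(\<exists>\<omega>::real. char_poly \<alpha> b Vp \<theta> (\<i> * complex_of_real \<omega>) = 0)
            \<longleftrightarrow> Vp = \<alpha> / (2 * (cos (\<theta> / 2))\<^sup>2) + b
                             + 2 * (tan (\<theta> / 2))\<^sup>2 * b * (b / \<alpha> + 1)"
      using RHS by simp
  qed
qed

end
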